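(* Let $|\Pi|=n>2$, let $\mathcal{G}$ be a rooted communication graph on $\Pi$ with $\operatorname{Root}(\mathcal{G})=R$, let $\mathcal{G}'$ be a rooted communication graph on $\Pi$ with $\operatorname{Root}(\mathcal{G}')=R'$, and let $R''\subseteq \Pi$ be nonempty with $R''\neq R$ and $R''\neq R'$. Then there is a sequence of communication graphs $\mathcal{G}=\mathcal{G}_1,\mathcal{G}_2,\dots,\mathcal{G}_k=\mathcal{G}'$ such that each $\mathcal{G}_i$ is rooted, $\operatorname{Root}(\mathcal{G}_i)\neq R''$, and for $1\le i<k$ the graphs $\mathcal{G}_i$ and $\mathcal{G}_{i+1}$ differ in exactly one edge.
   Context: A communication graph on $\Pi$ is a directed graph with vertex set $\Pi$ containing every self-loop. A root component of a graph $\mathcal{G}$ is a nonempty set $R\subseteq\Pi$ that is the vertex set of a strongly connected component of $\mathcal{G}$ such that no edge $(p\to q)$ with $q\in R$, $p\notin R$ exists. A graph is rooted if it has exactly one root component, denoted $\operatorname{Root}(\mathcal{G})$. *)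

theory Defs
  imports Main
begin

text \<open>Processes are the elements of a finite type 'p (the set \<Pi> = UNIV).
  A directed graph on \<Pi> is given by its edge set, a relation on 'p.\<close>

definition comm_graph :: "('p \<times> 'p) set \<Rightarrow> bool" where
  "comm_graph E \<longleftrightarrow> (\<forall>p. (p, p) \<in> E)"

definition is_scc :: "('p \<times> 'p) set \<Rightarrow> 'p set \<Rightarrow> bool" where
  "is_scc E C \<longleftrightarrow> C \<noteq> {} \<and> (\<forall>p\<in>C. \<forall>q. q \<in> C \<longleftrightarrow> ((p, q) \<in> E\<^sup>* \<and> (q, p) \<in> E\<^sup>*))"

definition is_root_comp :: "('p \<times> 'p) set \<Rightarrow> 'p set \<Rightarrow> bool" where
  "is_root_comp E R \<longleftrightarrow> R \<noteq> {} \<and> is_scc E R \<and> (\<forall>p q. (p, q) \<in> E \<and> q \<in> R \<longrightarrow> p \<in> R)"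

definition rooted :: "('p \<times> 'p) set \<Rightarrow> bool" where
  "rooted E \<longleftrightarrow> (\<exists>!R. is_root_comp E R)"

definition Root :: "('p \<times> 'p) set \<Rightarrow> 'p set" where
  "Root E = (THE R. is_root_comp E R)"

definition differ_one_edge :: "('p \<times> 'p) set \<Rightarrow> ('p \<times> 'p) set \<Rightarrow> bool" where
  "differ_one_edge E F \<longleftrightarrow> card ((E - F) \<union> (F - E)) = 1"

end

theory Submission
  imports Defs
begin

definition ostep :: "(('p\<times>'p) set \<Rightarrow> bool) \<Rightarrow> ('p\<times>'p) set \<Rightarrow> ('p\<times>'p) set \<Rightarrow> bool" where
  "ostep Q E F \<longleftrightarrow> Q E \<and> Q F \<and> differ_one_edge E F"

definition Pg :: "'p set \<Rightarrow> ('p\<times>'p) set \<Rightarrow> bool" where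
  "Pg R'' H \<longleftrightarrow> comm_graph H \<and> rooted H \<and> Root H \<noteq> R''"

definition Kg :: "'p set \<Rightarrow> ('p\<times>'p) set" where
  "Kg S = Id \<union> S \<times> UNIV"

lemma reach_sym: assumes "(ostep Q)\<^sup>*\<^sup>* E F" shows "(ostep Q)\<^sup>*\<^sup>* F E"
  using assms
proof induction
  case base thus ?case by simp
next
  case (step y z)
  have "ostep Q z y" using step(2) unfolding ostep_def differ_one_edge_def by (simp add: Un_commute)
  thus ?case using step(3) by (rule converse_rtranclp_into_rtranclp)
qed

lemma reach_list:
  assumes "(ostep Q)\<^sup>*\<^sup>* E F" "Q E"
  shows "\<exists>Gs. Gs \<noteq> [] \<and> hd Gs = E \<and> last Gs = F \<and> (\<forall>H\<in>set Gs. Q H) \<and>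
     (\<forall>i. Suc i < length Gs \<longrightarrow> differ_one_edge (Gs!i) (Gs!Suc i))"
  using assms(1)
proof induction
  case base thus ?case using assms(2) by (intro exI[of _ "[E]"]) auto
next
  case (step y z)
  then obtain Gs where G: "Gs \<noteq> []" "hd Gs = E" "last Gs = y" "\<forall>H\<in>set Gs. Q H"
    "\<forall>i. Suc i < length Gs \<longrightarrow> differ_one_edge (Gs!i) (Gs!Suc i)" by blast
  have "\<forall>i. Suc i < length (Gs@[z]) \<longrightarrow> differ_one_edge ((Gs@[z])!i) ((Gs@[z])!Suc i)"
  proof (intro allI impI)
    fix i assume i: "Suc i < length (Gs@[z])"
    show "differ_one_edge ((Gs@[z])!i) ((Gs@[z])!Suc i)"
    proof (cases "Suc i < length Gs")
      case True thus ?thesis using G(5) by (simp add: nth_append)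
    next
      case False
      hence "Suc i = length Gs" using i by simp
      hence i2: "i = length Gs - 1" by simp
      have "(Gs@[z])!i = y" using G(1,3) i2 by (simp add: nth_append last_conv_nth)
      moreover have "(Gs@[z])!Suc i = z" using \<open>Suc i = length Gs\<close> by (simp add: nth_append)
      ultimately have "(Gs@[z])!i = y" "(Gs@[z])!Suc i = z" by auto
      thus ?thesis using step(2) unfolding ostep_def by simp
    qed
  qed
  thus ?case using G step(2) unfolding ostep_def by (intro exI[of _ "Gs@[z]"]) auto
qed

lemma reach_add:
  fixes E D :: "('p::finite \<times> 'p) set"
  assumes "D \<inter> E = {}" "\<forall>Y\<subseteq>D. Q (E \<union> Y)"
  shows "(ostep Q)\<^sup>*\<^sup>* E (E \<union> D)"
proof -
  have "finite D" by simp
  thus ?thesis using assms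
  proof (induction D rule: finite_induct)
    case empty thus ?case by simp
  next
    case (insert d D)
    have IH: "(ostep Q)\<^sup>*\<^sup>* E (E \<union> D)" using insert by auto
    have d: "(E \<union> D - (E \<union> insert d D)) \<union> (E \<union> insert d D - (E \<union> D)) = {d}" using insert by auto
    have q1: "Q (E \<union> D)" using insert.prems(2) by blast
    have q2: "Q (E \<union> insert d D)" using insert.prems(2) by blast
    have "ostep Q (E \<union> D) (E \<union> insert d D)" unfolding ostep_def differ_one_edge_def d
      using q1 q2 by simp
    with IH show ?case by (rule rtranclp.rtrancl_into_rtrancl)
  qed
qed

lemma reach_interval:
  fixes E F :: "('p::finite \<times> 'p) set"
  assumes "E \<subseteq> F" "\<forall>H. E \<subseteq> H \<and> H \<subseteq> F \<longrightarrow> Q H"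
  shows "(ostep Q)\<^sup>*\<^sup>* E F"
proof -
  have "(ostep Q)\<^sup>*\<^sup>* E (E \<union> (F - E))"
    by (rule reach_add) (use assms in auto)
  moreover have "E \<union> (F - E) = F" using assms by auto
  ultimately show ?thesis by simp
qed

lemma closed_rt:
  assumes "\<forall>x y. (x,y)\<in>H \<and> y\<in>A \<longrightarrow> x\<in>A" "(x,y)\<in>H\<^sup>*" "y\<in>A" shows "x\<in>A"
  using assms(2,3)
  by (induction rule: converse_rtrancl_induct) (use assms(1) in blast)+

lemma root_char:
  assumes "r \<in> R" "\<forall>x. (r,x)\<in>H\<^sup>*" "\<forall>x y. (x,y)\<in>H \<and> y\<in>R \<longrightarrow> x\<in>R" "\<forall>x\<in>R. (x,r)\<in>H\<^sup>*"
  shows "rooted H \<and> Root H = R"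
proof -
  have scc: "\<forall>p\<in>R. \<forall>q. q \<in> R \<longleftrightarrow> ((p, q) \<in> H\<^sup>* \<and> (q, p) \<in> H\<^sup>*)"
  proof (intro ballI allI iffI)
    fix p q assume p: "p \<in> R" and q: "q \<in> R"
    show "(p,q)\<in>H\<^sup>* \<and> (q,p)\<in>H\<^sup>*" using assms(2,4) p q by (meson rtrancl_trans)
  next
    fix p q assume p: "p \<in> R" and "(p,q)\<in>H\<^sup>* \<and> (q,p)\<in>H\<^sup>*"
    thus "q\<in>R" using closed_rt[OF assms(3)] by blast
  qed
  have rc: "is_root_comp H R" unfolding is_root_comp_def is_scc_def
    using scc assms(1,3) by blast
  have uniq: "\<And>C. is_root_comp H C \<Longrightarrow> C = R"
  proof -
    fix C assume C: "is_root_comp H C"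
    then obtain c where c: "c \<in> C" unfolding is_root_comp_def by blast
    have cl: "\<forall>x y. (x,y)\<in>H \<and> y\<in>C \<longrightarrow> x\<in>C" using C unfolding is_root_comp_def by blast
    have rC: "r \<in> C" using closed_rt[OF cl] assms(2) c by blast
    have sC: "\<forall>q. q \<in> C \<longleftrightarrow> ((r, q) \<in> H\<^sup>* \<and> (q, r) \<in> H\<^sup>*)"
      using C rC unfolding is_root_comp_def is_scc_def by blast
    show "C = R" using sC scc assms(1) by blast
  qed
  have "rooted H" unfolding rooted_def using rc uniq by blast
  moreover have "Root H = R" unfolding Root_def using rc uniq by (rule the_equality)
  ultimately show ?thesis by simp
qed

lemma rooted_rc: assumes "rooted G" shows "is_root_comp G (Root G)"
  using assms unfolding rooted_def Root_def by (rule theI')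

lemma rooted_reach:
  fixes G :: "('p::finite \<times> 'p) set"
  assumes "rooted G" "r \<in> Root G" shows "(r,v) \<in> G\<^sup>*"
proof (rule ccontr)
  assume nv: "(r,v) \<notin> G\<^sup>*"
  define R where "R = Root G"
  have rc: "is_root_comp G R" using rooted_rc[OF assms(1)] R_def by simp
  define S where "S = {x. (x,v)\<in>G\<^sup>*}"
  define anc where "anc = (\<lambda>x. {y. (y,x)\<in>G\<^sup>*})"
  define u where "u = arg_min_on (\<lambda>x. card (anc x)) S"
  have "finite S" "S \<noteq> {}" unfolding S_def by auto
  from arg_min_if_finite[OF this, of "\<lambda>x. card (anc x)"]
  have uS: "u \<in> S" and umin: "\<forall>w\<in>S. card (anc u) \<le> card (anc w)"
    unfolding u_def by (auto simp: not_less)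
  define C where "C = {y. (u,y)\<in>G\<^sup>* \<and> (y,u)\<in>G\<^sup>*}"
  have "is_root_comp G C" unfolding is_root_comp_def is_scc_def
  proof (intro conjI)
    show "C \<noteq> {}" unfolding C_def by auto
    thus "C \<noteq> {}" .
    show "\<forall>p\<in>C. \<forall>q. (q \<in> C) = ((p, q) \<in> G\<^sup>* \<and> (q, p) \<in> G\<^sup>*)"
    proof (intro ballI allI iffI)
      fix p q assume p: "p \<in> C" and q: "q \<in> C"
      have a1: "(p,u) \<in> G\<^sup>*" "(u,q) \<in> G\<^sup>*" "(q,u) \<in> G\<^sup>*" "(u,p) \<in> G\<^sup>*"
        using p q unfolding C_def by auto
      show "(p, q) \<in> G\<^sup>* \<and> (q, p) \<in> G\<^sup>*"
        using rtrancl_trans[OF a1(1) a1(2)] rtrancl_trans[OF a1(3) a1(4)] by simp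
    next
      fix p q assume p: "p \<in> C" and pq: "(p, q) \<in> G\<^sup>* \<and> (q, p) \<in> G\<^sup>*"
      have a1: "(p,u) \<in> G\<^sup>*" "(u,p) \<in> G\<^sup>*" using p unfolding C_def by auto
      have "(u,q) \<in> G\<^sup>*" using rtrancl_trans[OF a1(2)] pq by blast
      moreover have "(q,u) \<in> G\<^sup>*" using rtrancl_trans[OF _ a1(1)] pq by blast
      ultimately show "q \<in> C" unfolding C_def by simp
    qed
    show "\<forall>p q. (p, q) \<in> G \<and> q \<in> C \<longrightarrow> p \<in> C"
    proof (intro allI impI)
      fix p q assume pq: "(p, q) \<in> G \<and> q \<in> C"
      have qu: "(q,u)\<in>G\<^sup>*" using pq unfolding C_def by simp
      have pu: "(p,u)\<in>G\<^sup>*" using converse_rtrancl_into_rtrancl[OF _ qu] pq by blast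
      have uv: "(u,v)\<in>G\<^sup>*" using uS unfolding S_def by simp
      have pS: "p \<in> S" using rtrancl_trans[OF pu uv] unfolding S_def by simp
      have sub: "anc p \<subseteq> anc u" unfolding anc_def using pu by (auto intro: rtrancl_trans)
      have "card (anc u) \<le> card (anc p)" using umin pS by blast
      moreover have "card (anc p) \<le> card (anc u)" by (rule card_mono[OF finite sub])
      ultimately have "card (anc p) = card (anc u)" by simp
      hence "anc p = anc u" by (rule card_subset_eq[OF finite sub])
      hence "(u,p) \<in> G\<^sup>*" unfolding anc_def by blast
      thus "p \<in> C" unfolding C_def using pu by simp
    qed
  qed
  hence "C = R" using assms(1) rc unfolding rooted_def by blast
  hence "u \<in> R" unfolding C_def by auto
  hence "(r,u)\<in>G\<^sup>*" using rc assms(2) R_def unfolding is_root_comp_def is_scc_def by blast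
  hence "(r,v)\<in>G\<^sup>*" using uS unfolding S_def by (meson mem_Collect_eq rtrancl_trans)
  thus False using nv by simp
qed

lemma K_move:
  fixes S :: "'p::finite set"
  assumes "S \<noteq> {}" "x \<notin> S" "S \<noteq> R''" "insert x S \<noteq> R''"
  shows "(ostep (Pg R''))\<^sup>*\<^sup>* (Kg S) (Kg (insert x S))"
proof (rule reach_interval)
  show "Kg S \<subseteq> Kg (insert x S)" unfolding Kg_def by auto
  show "\<forall>H. Kg S \<subseteq> H \<and> H \<subseteq> Kg (insert x S) \<longrightarrow> Pg R'' H"
  proof (intro allI impI)
    fix H assume H: "Kg S \<subseteq> H \<and> H \<subseteq> Kg (insert x S)"
    obtain r where r: "r \<in> S" using assms(1) by blast
    have cg: "comm_graph H" using H unfolding comm_graph_def Kg_def by auto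
    have ra: "\<forall>y. (r,y)\<in>H\<^sup>*" using H r unfolding Kg_def by (blast intro: r_into_rtrancl)
    have "rooted H \<and> (Root H = S \<or> Root H = insert x S)"
    proof (cases "\<exists>s\<in>S. (x,s)\<in>H")
      case True
      then obtain s where s: "s \<in> S" "(x,s)\<in>H" by blast
      have "rooted H \<and> Root H = insert x S"
      proof (rule root_char[of r])
        show "r \<in> insert x S" using r by simp
        show "\<forall>y. (r,y)\<in>H\<^sup>*" by (rule ra)
        show "\<forall>u v. (u,v)\<in>H \<and> v\<in>insert x S \<longrightarrow> u\<in>insert x S"
          using H unfolding Kg_def by auto
        have "(s,r) \<in> H" using H s unfolding Kg_def by auto
        hence "(x,r) \<in> H\<^sup>*" using s by (meson r_into_rtrancl rtrancl_trans)
        moreover have "\<forall>y\<in>S. (y,r)\<in>H\<^sup>*" using H unfolding Kg_def by (blast intro: r_into_rtrancl)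
        ultimately show "\<forall>y\<in>insert x S. (y,r)\<in>H\<^sup>*" by simp
      qed
      thus ?thesis by simp
    next
      case False
      have "rooted H \<and> Root H = S"
      proof (rule root_char[of r])
        show "r \<in> S" using r by simp
        show "\<forall>y. (r,y)\<in>H\<^sup>*" by (rule ra)
        show "\<forall>u v. (u,v)\<in>H \<and> v\<in>S \<longrightarrow> u\<in>S"
          using H False unfolding Kg_def by auto
        show "\<forall>y\<in>S. (y,r)\<in>H\<^sup>*" using H unfolding Kg_def by (blast intro: r_into_rtrancl)
      qed
      thus ?thesis by simp
    qed
    thus "Pg R'' H" unfolding Pg_def using cg assms by auto
  qed
qed

lemma K_chain:
  fixes T :: "'p::finite set"
  shows "a \<in> S \<Longrightarrow> S \<inter> T = {} \<Longrightarrow> (\<forall>U. a\<in>U \<and> U \<subseteq> S \<union> T \<longrightarrow> U \<noteq> R'') \<Longrightarrow>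
    (ostep (Pg R''))\<^sup>*\<^sup>* (Kg S) (Kg (S \<union> T))"
proof -
  assume a: "a \<in> S"
  have "finite T" by simp
  thus "S \<inter> T = {} \<Longrightarrow> (\<forall>U. a\<in>U \<and> U \<subseteq> S \<union> T \<longrightarrow> U \<noteq> R'') \<Longrightarrow>
    (ostep (Pg R''))\<^sup>*\<^sup>* (Kg S) (Kg (S \<union> T))"
  proof (induction T rule: finite_induct)
    case empty thus ?case by simp
  next
    case (insert t T)
    have IH: "(ostep (Pg R''))\<^sup>*\<^sup>* (Kg S) (Kg (S \<union> T))" using insert by blast
    have "(ostep (Pg R''))\<^sup>*\<^sup>* (Kg (S \<union> T)) (Kg (insert t (S \<union> T)))"
    proof (rule K_move)
      show "S \<union> T \<noteq> {}" using a by blast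
      show "t \<notin> S \<union> T" using insert.hyps(2) insert.prems(1) by blast
      show "S \<union> T \<noteq> R''" using insert.prems(2)[rule_format, of "S \<union> T"] a by blast
      show "insert t (S \<union> T) \<noteq> R''" using insert.prems(2)[rule_format, of "insert t (S \<union> T)"] a by blast
    qed
    moreover have "insert t (S \<union> T) = S \<union> insert t T" by auto
    ultimately show ?case using IH by (metis rtranclp_trans)
  qed
qed

lemma pick:
  assumes "R \<noteq> {}" "R \<noteq> R''"
  shows "\<exists>a\<in>R. \<forall>U. a\<in>U \<and> U \<subseteq> R \<longrightarrow> U \<noteq> R''"
proof (cases "\<exists>a\<in>R. a \<notin> R''")
  case True thus ?thesis by blast
next
  case False
  then obtain a where "a \<in> R" using assms by blast
  thus ?thesis using False assms(2) by blast
qed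

lemma to_single:
  fixes R :: "'p::finite set"
  assumes "a \<in> R" "\<forall>U. a\<in>U \<and> U \<subseteq> R \<longrightarrow> U \<noteq> R''"
  shows "(ostep (Pg R''))\<^sup>*\<^sup>* (Kg {a}) (Kg R)"
proof -
  have "(ostep (Pg R''))\<^sup>*\<^sup>* (Kg {a}) (Kg ({a} \<union> (R - {a})))"
    by (rule K_chain[of a]) (use assms in auto)
  moreover have "{a} \<union> (R - {a}) = R" using assms by auto
  ultimately show ?thesis by simp
qed

lemma middle:
  fixes a b :: "'p::finite"
  assumes "card (UNIV :: 'p set) > 2" "{a} \<noteq> R''" "{b} \<noteq> R''"
  shows "(ostep (Pg R''))\<^sup>*\<^sup>* (Kg {a}) (Kg {b})"
proof (cases "a = b")
  case True thus ?thesis by simp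
next
  case ab: False
  show ?thesis
  proof (cases "insert b {a} = R''")
    case False
    have 1: "(ostep (Pg R''))\<^sup>*\<^sup>* (Kg {a}) (Kg (insert b {a}))"
      using K_move[of "{a}" b R''] assms ab False by simp
    have eq: "insert b {a} = insert a {b}" by auto
    have 2: "(ostep (Pg R''))\<^sup>*\<^sup>* (Kg {b}) (Kg (insert a {b}))"
      using K_move[of "{b}" a R''] assms ab False eq by simp
    have twoa: "(ostep (Pg R''))\<^sup>*\<^sup>* (Kg (insert b {a})) (Kg {b})" using reach_sym[OF 2] eq by simp
    show ?thesis by (rule rtranclp_trans[OF 1 twoa])
  next
    case True
    have "card {a,b} \<le> 2" by (simp add: card_insert_le_m1)
    hence "{a,b} \<noteq> UNIV" using assms(1) by (metis not_le)
    then obtain c where c: "c \<noteq> a" "c \<noteq> b" by blast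
    have n1: "insert c {a} \<noteq> R''" using True c by blast
    have n2: "insert c {b} \<noteq> R''" using True c by blast
    have n3: "{c} \<noteq> R''" using True c ab by blast
    have e1: "insert c {a} = insert a {c}" by auto
    have e2: "insert c {b} = insert b {c}" by auto
    have 1: "(ostep (Pg R''))\<^sup>*\<^sup>* (Kg {a}) (Kg (insert c {a}))"
      using K_move[of "{a}" c R''] assms c n1 by simp
    have 2: "(ostep (Pg R''))\<^sup>*\<^sup>* (Kg {c}) (Kg (insert a {c}))"
      using K_move[of "{c}" a R''] assms c n1 n3 e1 by simp
    have 3: "(ostep (Pg R''))\<^sup>*\<^sup>* (Kg {c}) (Kg (insert b {c}))"
      using K_move[of "{c}" b R''] assms c n2 n3 e2 by simp
    have 4: "(ostep (Pg R''))\<^sup>*\<^sup>* (Kg {b}) (Kg (insert c {b}))"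
      using K_move[of "{b}" c R''] assms c n2 by simp
    have "(ostep (Pg R''))\<^sup>*\<^sup>* (Kg {a}) (Kg {c})"
    proof -
      have twoa: "(ostep (Pg R''))\<^sup>*\<^sup>* (Kg (insert c {a})) (Kg {c})" using reach_sym[OF 2] e1 by simp
      show ?thesis by (rule rtranclp_trans[OF 1 twoa])
    qed
    moreover have "(ostep (Pg R''))\<^sup>*\<^sup>* (Kg {c}) (Kg {b})"
    proof -
      have foura: "(ostep (Pg R''))\<^sup>*\<^sup>* (Kg (insert b {c})) (Kg {b})" using reach_sym[OF 4] e2 by simp
      show ?thesis by (rule rtranclp_trans[OF 3 foura])
    qed
    ultimately show ?thesis by (rule rtranclp_trans)
  qed
qed

lemma phase1:
  fixes G :: "('p::finite \<times> 'p) set"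
  assumes cg: "comm_graph G" and ro: "rooted G" and ne: "Root G \<noteq> R''"
  shows "(ostep (Pg R''))\<^sup>*\<^sup>* G (Kg (Root G))"
proof -
  define R where "R = Root G"
  have rc: "is_root_comp G R" using rooted_rc[OF ro] R_def by simp
  then obtain r where r: "r \<in> R" unfolding is_root_comp_def by blast
  have ra: "\<forall>x. (r,x)\<in>G\<^sup>*" using rooted_reach[OF ro] r R_def by blast
  have cl: "\<forall>x y. (x,y)\<in>G \<and> y\<in>R \<longrightarrow> x\<in>R" using rc unfolding is_root_comp_def by blast
  have toR: "\<forall>x\<in>R. (x,r)\<in>G\<^sup>*" using rc r unfolding is_root_comp_def is_scc_def by blast
  have A: "(ostep (Pg R''))\<^sup>*\<^sup>* G (G \<union> R \<times> UNIV)"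
  proof (rule reach_interval)
    show "G \<subseteq> G \<union> R \<times> UNIV" by auto
    show "\<forall>H. G \<subseteq> H \<and> H \<subseteq> G \<union> R \<times> UNIV \<longrightarrow> Pg R'' H"
    proof (intro allI impI)
      fix H assume H: "G \<subseteq> H \<and> H \<subseteq> G \<union> R \<times> UNIV"
      have "rooted H \<and> Root H = R"
      proof (rule root_char[OF r])
        show "\<forall>x. (r,x)\<in>H\<^sup>*" using ra H rtrancl_mono by blast
        show "\<forall>x y. (x,y)\<in>H \<and> y\<in>R \<longrightarrow> x\<in>R" using H cl by blast
        show "\<forall>x\<in>R. (x,r)\<in>H\<^sup>*" using toR H rtrancl_mono by blast
      qed
      moreover have "comm_graph H" using cg H unfolding comm_graph_def by auto
      ultimately show "Pg R'' H" unfolding Pg_def using ne R_def by auto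
    qed
  qed
  have B: "(ostep (Pg R''))\<^sup>*\<^sup>* (Kg R) (G \<union> R \<times> UNIV)"
  proof (rule reach_interval)
    show "Kg R \<subseteq> G \<union> R \<times> UNIV" using cg unfolding Kg_def comm_graph_def by auto
    show "\<forall>H. Kg R \<subseteq> H \<and> H \<subseteq> G \<union> R \<times> UNIV \<longrightarrow> Pg R'' H"
    proof (intro allI impI)
      fix H assume H: "Kg R \<subseteq> H \<and> H \<subseteq> G \<union> R \<times> UNIV"
      have "rooted H \<and> Root H = R"
      proof (rule root_char[OF r])
        show "\<forall>x. (r,x)\<in>H\<^sup>*" using r H unfolding Kg_def by (blast intro: r_into_rtrancl)
        show "\<forall>x y. (x,y)\<in>H \<and> y\<in>R \<longrightarrow> x\<in>R" using H cl by blast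
        show "\<forall>x\<in>R. (x,r)\<in>H\<^sup>*" using H r unfolding Kg_def by (blast intro: r_into_rtrancl)
      qed
      moreover have "comm_graph H" using H unfolding Kg_def comm_graph_def by auto
      ultimately show "Pg R'' H" unfolding Pg_def using ne R_def by auto
    qed
  qed
  show ?thesis using A reach_sym[OF B] R_def by (metis rtranclp_trans)
qed

theorem lemma2:
  fixes G G' :: "('p::finite \<times> 'p) set" and R'' :: "'p set"
  assumes "card (UNIV :: 'p set) > 2"
    and "comm_graph G" and "rooted G"
    and "comm_graph G'" and "rooted G'"
    and "R'' \<noteq> {}" and "R'' \<noteq> Root G" and "R'' \<noteq> Root G'"
  shows "\<exists>Gs :: ('p \<times> 'p) set list. Gs \<noteq> [] \<and> hd Gs = G \<and> last Gs = G' \<and>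
     (\<forall>H \<in> set Gs. comm_graph H \<and> rooted H \<and> Root H \<noteq> R'') \<and>
     (\<forall>i. Suc i < length Gs \<longrightarrow> differ_one_edge (Gs ! i) (Gs ! Suc i))"
proof -
  have n1: "Root G \<noteq> {}" using rooted_rc[OF assms(3)] unfolding is_root_comp_def by blast
  have n2: "Root G' \<noteq> {}" using rooted_rc[OF assms(5)] unfolding is_root_comp_def by blast
  obtain a where a: "a \<in> Root G" "\<forall>U. a\<in>U \<and> U \<subseteq> Root G \<longrightarrow> U \<noteq> R''"
    using pick[OF n1] assms(7) by metis
  obtain b where b: "b \<in> Root G'" "\<forall>U. b\<in>U \<and> U \<subseteq> Root G' \<longrightarrow> U \<noteq> R''"
    using pick[OF n2] assms(8) by metis
  have s1: "(ostep (Pg R''))\<^sup>*\<^sup>* G (Kg (Root G))" using phase1 assms by metis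
  have s2: "(ostep (Pg R''))\<^sup>*\<^sup>* (Kg (Root G)) (Kg {a})" using reach_sym[OF to_single[OF a]] .
  have s3: "(ostep (Pg R''))\<^sup>*\<^sup>* (Kg {a}) (Kg {b})"
    by (rule middle) (use assms(1) a b in auto)
  have s4: "(ostep (Pg R''))\<^sup>*\<^sup>* (Kg {b}) (Kg (Root G'))" using to_single[OF b] .
  have s5: "(ostep (Pg R''))\<^sup>*\<^sup>* (Kg (Root G')) G'" using reach_sym[OF phase1] assms by metis
  have "(ostep (Pg R''))\<^sup>*\<^sup>* G G'" using rtranclp_trans[OF rtranclp_trans[OF rtranclp_trans[OF rtranclp_trans[OF s1 s2] s3] s4] s5] .
  moreover have "Pg R'' G" unfolding Pg_def using assms by auto
  ultimately have "\<exists>Gs. Gs \<noteq> [] \<and> hd Gs = G \<and> last Gs = G' \<and> (\<forall>H\<in>set Gs. Pg R'' H) \<and>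
     (\<forall>i. Suc i < length Gs \<longrightarrow> differ_one_edge (Gs!i) (Gs!Suc i))" by (rule reach_list)
  thus ?thesis unfolding Pg_def .
qed

end
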